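(* Let $n,s$ be integers with $s \geq n \geq 1$, and consider the following game played with $n$ dice, each having $s$ equally likely faces numbered $1,\dots,s$. At each turn, if $k \geq 1$ dice remain in play, all $k$ of them are rolled and every die showing the value $k$ is removed from play; the game ends when no dice remain. For a game that ends after finitely many turns, its signature is the sequence of $n$ numbers recording, for each die, the value it showed on the roll at which it was removed, listed in the order in which the dice were removed (dice removed on the same turn all show the same value, so their relative order does not matter). Then the number of distinct signatures that can arise from finite games is $2^{n-1}$.
   Context: A game is a (possibly infinite) sequence of turns as described; it is called finite if it consists of finitely many turns. The standing assumption $s \geq n$ guarantees that every value $k \in \{1,\dots,n\}$ is a face of each die. *)

theory Defs
  imports Main
begin

text \<open>Dice are labelled by natural numbers; a state is the (finite) set of dice
  still in play.\<close>

definition removed :: "nat set \<Rightarrow> (nat \<Rightarrow> nat) \<Rightarrow> nat set" where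
  "removed D f = {d \<in> D. f d = card D}"

fun is_finite_game :: "nat \<Rightarrow> nat set \<Rightarrow> (nat \<Rightarrow> nat) list \<Rightarrow> bool" where
  "is_finite_game s D [] = (D = {})"
| "is_finite_game s D (f # fs) =
     (D \<noteq> {} \<and> (\<forall>d\<in>D. f d \<in> {1..s}) \<and> is_finite_game s (D - removed D f) fs)"

fun signature :: "nat set \<Rightarrow> (nat \<Rightarrow> nat) list \<Rightarrow> nat list" where
  "signature D [] = []"
| "signature D (f # fs) =
     map f (sorted_list_of_set (removed D f)) @ signature (D - removed D f) fs"

end

theory Submission
  imports Defs
begin

inductive sigs :: "nat \<Rightarrow> nat list \<Rightarrow> bool" where
  sigs0: "sigs 0 []"
| sigsS: "1 \<le> j \<Longrightarrow> j \<le> k \<Longrightarrow> sigs (k - j) xs \<Longrightarrow> sigs k (replicate j k @ xs)"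

lemma map_const_on: "(\<forall>x\<in>set xs. f x = c) \<Longrightarrow> map f xs = replicate (length xs) c"
  by (induction xs) auto

lemma game_sub:
  "is_finite_game s D g \<Longrightarrow> finite D \<and> sigs (card D) (signature D g)"
proof (induction g arbitrary: D)
  case Nil
  then show ?case by (auto intro: sigs0)
next
  case (Cons f fs)
  define R where "R = removed D f"
  have ne: "D \<noteq> {}" and rng: "\<forall>d\<in>D. f d \<in> {1..s}" and rest: "is_finite_game s (D - R) fs"
    using Cons.prems by (auto simp: R_def)
  from Cons.IH[OF rest] have fin': "finite (D - R)" and ih: "sigs (card (D - R)) (signature (D - R) fs)"
    by auto
  have RD: "R \<subseteq> D" by (auto simp: R_def removed_def)
  have finD: "finite D"
  proof (rule ccontr)
    assume "\<not> finite D"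
    then have "card D = 0" by simp
    then have "R = {}" using rng by (auto simp: R_def removed_def)
    then show False using fin' \<open>\<not> finite D\<close> by simp
  qed
  have finR: "finite R" using RD finD finite_subset by blast
  have sigeq: "signature D (f # fs) = replicate (card R) (card D) @ signature (D - R) fs"
  proof -
    have "map f (sorted_list_of_set R) = replicate (card R) (card D)"
      using finR by (subst map_const_on) (auto simp: R_def removed_def)
    then show ?thesis by (simp add: R_def)
  qed
  have cardD': "card (D - R) = card D - card R" using finR RD by (simp add: card_Diff_subset)
  show ?case
  proof (cases "R = {}")
    case True
    then show ?thesis using finD ih sigeq by simp
  next
    case False
    then have "1 \<le> card R" using finR by (simp add: Suc_le_eq card_gt_0_iff)
    moreover have "card R \<le> card D" using RD finD by (simp add: card_mono)
    ultimately show ?thesis using finD ih sigeq cardD' by (auto intro: sigsS)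
  qed
qed

lemma game_sup:
  assumes "sigs k xs" "k \<le> s"
  shows "\<And>D. finite D \<Longrightarrow> card D = k \<Longrightarrow> \<exists>g. is_finite_game s D g \<and> signature D g = xs"
  using assms
proof (induction k xs rule: sigs.induct)
  case sigs0
  then show ?case by (intro exI[of _ "[]"]) auto
next
  case (sigsS j k xs)
  obtain R where RD: "R \<subseteq> D" and cR: "card R = j"
    using obtain_subset_with_card_n[of j D] sigsS.hyps sigsS.prems by auto
  have finR: "finite R" using RD sigsS.prems finite_subset by blast
  define f where "f d = (if d \<in> R then k else 1)" for d
  have rem: "removed D f = R"
  proof -
    have "d \<in> R" if "d \<in> D" "f d = k" for d
    proof (rule ccontr)
      assume nr: "d \<notin> R"
      then have "k = 1" using that by (simp add: f_def)
      then have "card R = card D" using cR sigsS.hyps sigsS.prems by simp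
      then have "R = D" using RD sigsS.prems card_subset_eq by blast
      then show False using nr that by simp
    qed
    moreover have "removed D f = {d\<in>D. f d = k}" using sigsS.prems(2) by (simp add: removed_def)
    ultimately have "removed D f \<subseteq> R" by blast
    moreover have "R \<subseteq> removed D f" using RD by (auto simp: removed_def f_def sigsS.prems)
    ultimately show ?thesis by blast
  qed
  have c': "card (D - R) = k - j" using finR RD cR sigsS.prems by (simp add: card_Diff_subset)
  obtain g where g: "is_finite_game s (D - R) g" "signature (D - R) g = xs"
  proof -
    have le: "k - j \<le> s" using sigsS.prems by simp
    have fD: "finite (D - R)" using sigsS.prems by simp
    show ?thesis using sigsS.IH[of "D - R", OF fD c' le] that by blast
  qed
  have ne: "D \<noteq> {}" using sigsS.hyps sigsS.prems by auto
  have k1: "1 \<le> k" "k \<le> s" using sigsS.hyps sigsS.prems by auto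
  have rng: "\<forall>d\<in>D. f d \<in> {1..s}" 
  proof
    fix d assume "d \<in> D"
    show "f d \<in> {1..s}" using k1 by (cases "d \<in> R") (simp_all add: f_def)
  qed
  have mp: "map f (sorted_list_of_set R) = replicate j k"
    using finR cR by (subst map_const_on) (auto simp: f_def)
  have G: "is_finite_game s D (f # g)" using ne rng g(1) by (simp only: is_finite_game.simps rem) blast
  have S: "signature D (f # g) = replicate j k @ xs" using g(2) mp by (simp only: signature.simps rem)
  show ?case using G S by blast
qed

lemma sigs_le: "sigs k xs \<Longrightarrow> \<forall>x\<in>set xs. x \<le> k"
  by (induction rule: sigs.induct) auto

lemma sigs_eq:
  "{xs. sigs k xs} = (if k = 0 then {[]} else (\<Union>j\<in>{1..k}. (\<lambda>xs. replicate j k @ xs) ` {xs. sigs (k - j) xs}))"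
proof (cases "k = 0")
  case True
  have "xs = []" if "sigs 0 xs" for xs
    using that by (cases rule: sigs.cases) auto
  then have "{xs. sigs 0 xs} = {[]}" using sigs0 by blast
  then show ?thesis using True by simp
next
  case False
  have "xs \<in> (\<Union>j\<in>{1..k}. (\<lambda>xs. replicate j k @ xs) ` {xs. sigs (k - j) xs})" if "sigs k xs" for xs
    using that
  proof cases
    case sigs0 then show ?thesis using False by simp
  next
    case (sigsS j ys)
    then have "j \<in> {1..k}" by simp
    then show ?thesis using sigsS(1,4) by blast
  qed
  moreover have "sigs k xs" if "xs \<in> (\<Union>j\<in>{1..k}. (\<lambda>xs. replicate j k @ xs) ` {xs. sigs (k - j) xs})" for xs
  proof -
    from that obtain j ys where "j \<in> {1..k}" "sigs (k - j) ys" "xs = replicate j k @ ys" by blast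
    then show ?thesis using sigs.sigsS[of j k ys] by simp
  qed
  ultimately have "{xs. sigs k xs} = (\<Union>j\<in>{1..k}. (\<lambda>xs. replicate j k @ xs) ` {xs. sigs (k - j) xs})"
    by (intro set_eqI) (simp only: mem_Collect_eq; blast)
  then show ?thesis using False by simp
qed

lemma tw: "1 \<le> j \<Longrightarrow> j \<le> k \<Longrightarrow> sigs (k - j) xs \<Longrightarrow>
   length (takeWhile (\<lambda>x. x = k) (replicate j k @ xs)) = j"
proof -
  assume a: "1 \<le> j" "j \<le> k" "sigs (k - j) xs"
  have "takeWhile (\<lambda>x. x = k) xs = []"
  proof (cases xs)
    case (Cons y ys)
    then have "y \<le> k - j" using sigs_le[OF a(3)] by auto
    then show ?thesis using a Cons by auto
  qed simp
  moreover have "length (takeWhile (\<lambda>x. x = k) (replicate j k @ xs)) = j + length (takeWhile (\<lambda>x. x = k) xs)"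
    by (induction j) auto
  ultimately show ?thesis by simp
qed

lemma card_sigs: "finite {xs. sigs k xs} \<and> card {xs. sigs k xs} = (if k = 0 then 1 else 2 ^ (k - 1))"
proof (induction k rule: less_induct)
  case (less k)
  show ?case
  proof (cases "k = 0")
    case True
    have "{xs. sigs 0 xs} = {[]}" using sigs_eq[of 0] by simp
    then show ?thesis using True by simp
  next
    case False
    let ?A = "\<lambda>j. (\<lambda>xs. replicate j k @ xs) ` {xs. sigs (k - j) xs}"
    have finA: "\<forall>j\<in>{1..k}. finite (?A j)" using less False by auto
    have disj: "\<forall>i\<in>{1..k}. \<forall>j\<in>{1..k}. i \<noteq> j \<longrightarrow> ?A i \<inter> ?A j = {}"
    proof (intro ballI impI)
      fix i j assume "i \<in> {1..k}" "j \<in> {1..k}" "i \<noteq> j"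
      then show "?A i \<inter> ?A j = {}" using tw[of i k] tw[of j k] by fastforce
    qed
    have cA: "card (?A j) = card {xs. sigs (k - j) xs}" for j
      by (rule card_image) (auto simp: inj_on_def)
    have "card {xs. sigs k xs} = card (\<Union>j\<in>{1..k}. ?A j)"
      using False by (subst sigs_eq) simp
    also have "\<dots> = (\<Sum>j\<in>{1..k}. card (?A j))"
      by (rule card_UN_disjoint) (use finA disj in auto)
    also have "\<dots> = (\<Sum>j\<in>{1..k}. card {xs. sigs (k - j) xs})" by (simp add: cA)
    also have "\<dots> = (\<Sum>j\<in>{1..k}. (if k - j = 0 then 1 else 2 ^ (k - j - 1)))"
      by (rule sum.cong) (use less in auto)
    also have "\<dots> = (\<Sum>m<k. (if m = 0 then 1 else 2 ^ (m - 1)))"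
    proof -
      have "(\<Sum>j\<in>{1..k}. (if k - j = 0 then 1 else 2 ^ (k - j - 1))) =
            (\<Sum>m\<in>(\<lambda>j. k - j) ` {1..k}. (if m = 0 then 1 else 2 ^ (m - 1)::nat))"
        by (subst sum.reindex) (auto simp: inj_on_def)
      moreover have "(\<lambda>j. k - j) ` {1..k} = {..<k}"
      proof
        show "{..<k} \<subseteq> (\<lambda>j. k - j) ` {1..k}"
        proof
          fix m assume "m \<in> {..<k}"
          then show "m \<in> (\<lambda>j. k - j) ` {1..k}" by (intro image_eqI[of _ _ "k - m"]) auto
        qed
      qed auto
      ultimately show ?thesis by simp
    qed
    also have "\<dots> = 2 ^ (k - 1)"
    proof -
      have "(\<Sum>m<Suc n. (if m = 0 then 1 else 2 ^ (m - 1)::nat)) = 2 ^ n" for n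
        by (induction n) auto
      from this[of "k - 1"] False show ?thesis by simp
    qed
    finally show ?thesis using False finA by (subst sigs_eq) auto
  qed
qed

theorem proposition2p7:
  fixes n s :: nat
  assumes "1 \<le> n" and "n \<le> s"
  shows "card (signature {0..<n} ` {g. is_finite_game s {0..<n} g}) = 2 ^ (n - 1)"
proof -
  have "signature {0..<n} ` {g. is_finite_game s {0..<n} g} = {xs. sigs n xs}"
  proof
    show "signature {0..<n} ` {g. is_finite_game s {0..<n} g} \<subseteq> {xs. sigs n xs}"
      using game_sub by fastforce
    show "{xs. sigs n xs} \<subseteq> signature {0..<n} ` {g. is_finite_game s {0..<n} g}"
    proof
      fix xs assume "xs \<in> {xs. sigs n xs}"
      then obtain g where "is_finite_game s {0..<n} g" "signature {0..<n} g = xs"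
        using game_sup[of n xs s "{0..<n}"] assms by auto
      then show "xs \<in> signature {0..<n} ` {g. is_finite_game s {0..<n} g}" by blast
    qed
  qed
  then show ?thesis using card_sigs[of n] assms by simp
qed

end
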